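(* Let $G=\langle c,s\rangle$ and $\phi:H\to G$ be as in the context. Let $w=s^{\alpha_0}c^{\beta_1}s^{\alpha_1}c^{\beta_2}\cdots s^{\alpha_{n-1}}c^{\beta_n}s^{\alpha_n}$, where $n\ge1$, $\alpha_0,\ldots,\alpha_n,\beta_1,\ldots,\beta_n$ are integers, all nonzero except possibly $\alpha_0$ and $\alpha_n$. Put $\gamma_j=\sum_{i=0}^{j-1}\alpha_i$ for $j=1,\ldots,n$ and $B_i=\{j\in\{1,\ldots,n\}:\gamma_j=\gamma_i\}$. If $w$, regarded as an element of $G$, belongs to $\phi(H)$, then $\sum_{j\in B_i}\beta_j=0$ for all $i=1,\ldots,n$.
   Context: Notation: $x^y=yxy^{-1}$, $[x,y]=xyx^{-1}y^{-1}$. For groups $A,B$, the wreath product $A\,\mathrm{Wr}\,B$ is the semidirect product $A^B\rtimes B$, where $A^B$ is the group of all functions $B\to A$ with pointwise multiplication and $B$ acts by $(bf)(x)=f(xb)$, written $f^b=bfb^{-1}$. $H$ is a group generated by a countable set $\{a^{(1)},a^{(2)},\ldots\}$. Let $Z=\langle z\rangle$ be infinite cyclic and $b^{(i)}\in H^Z$ with $b^{(i)}(z^k)=a^{(i)}$ if $k>0$ and $1$ otherwise; $K=\langle z,b^{(i)}\ (i\in\mathbb{N})\rangle\le H\,\mathrm{Wr}\,Z$. Let $\langle s\rangle$ be infinite cyclic and $c\in K^{\langle s\rangle}$ with $c(s)=z$, $c(s^{2^i})=b^{(i)}$ for $i>0$, $c(s^k)=1$ otherwise; $G=\langle c,s\rangle\le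 K\,\mathrm{Wr}\,\langle s\rangle$. The map $\phi:H\to G$, $a^{(i)}\mapsto[c,c^{s^{2^i-1}}]$, is an injective homomorphism. *)

theory Defs
  imports "HOL-Algebra.Algebra"
begin

text \<open>Unrestricted wreath product A Wr Z with Z infinite cyclic, generator identified
with 1 :: int.  An element (f, m) stands for f z^m, where f : Z \<rightarrow> A is an arbitrary
function (no finiteness of support).  The action is (z^m f)(z^x) = f(z^(x+m)), so
(f, m)(g, n) = (f \<cdot> z^m g z^-m, m + n) = (\<lambda>x. f x \<cdot> g (x + m), m + n).\<close>
definition wr :: "('a, 'm) monoid_scheme \<Rightarrow> ((int \<Rightarrow> 'a) \<times> int) monoid" where
  "wr A = \<lparr>carrier = {p. \<forall>x. fst p x \<in> carrier A},
           monoid.mult = (\<lambda>p q. ((\<lambda>x. fst p x \<otimes>\<^bsub>A\<^esub> fst q (x + snd p)), snd p + snd q)),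
           one = ((\<lambda>x. \<one>\<^bsub>A\<^esub>), 0)\<rparr>"

definition wr_z :: "('a, 'm) monoid_scheme \<Rightarrow> (int \<Rightarrow> 'a) \<times> int" where
  "wr_z H = ((\<lambda>_. \<one>\<^bsub>H\<^esub>), 1)"

definition wr_b :: "('a, 'm) monoid_scheme \<Rightarrow> (nat \<Rightarrow> 'a) \<Rightarrow> nat \<Rightarrow> (int \<Rightarrow> 'a) \<times> int" where
  "wr_b H a i = ((\<lambda>k. if k > 0 then a i else \<one>\<^bsub>H\<^esub>), 0)"

definition grpK :: "('a, 'm) monoid_scheme \<Rightarrow> (nat \<Rightarrow> 'a) \<Rightarrow> ((int \<Rightarrow> 'a) \<times> int) monoid" where
  "grpK H a = (wr H)\<lparr>carrier := generate (wr H) (insert (wr_z H) {wr_b H a i | i. i \<ge> 1})\<rparr>"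

definition grpW :: "('a, 'm) monoid_scheme \<Rightarrow> (nat \<Rightarrow> 'a)
    \<Rightarrow> ((int \<Rightarrow> (int \<Rightarrow> 'a) \<times> int) \<times> int) monoid" where
  "grpW H a = wr (grpK H a)"

definition cfun :: "('a, 'm) monoid_scheme \<Rightarrow> (nat \<Rightarrow> 'a) \<Rightarrow> int \<Rightarrow> (int \<Rightarrow> 'a) \<times> int" where
  "cfun H a k = (if k = 1 then wr_z H
                 else if (\<exists>i::nat. i > 0 \<and> k = 2 ^ i) then wr_b H a (THE i::nat. k = 2 ^ i)
                 else \<one>\<^bsub>grpK H a\<^esub>)"

definition elt_c :: "('a, 'm) monoid_scheme \<Rightarrow> (nat \<Rightarrow> 'a) \<Rightarrow> (int \<Rightarrow> (int \<Rightarrow> 'a) \<times> int) \<times> int" where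
  "elt_c H a = (cfun H a, 0)"

definition elt_s :: "('a, 'm) monoid_scheme \<Rightarrow> (nat \<Rightarrow> 'a) \<Rightarrow> (int \<Rightarrow> (int \<Rightarrow> 'a) \<times> int) \<times> int" where
  "elt_s H a = ((\<lambda>_. \<one>\<^bsub>grpK H a\<^esub>), 1)"

definition grpG :: "('a, 'm) monoid_scheme \<Rightarrow> (nat \<Rightarrow> 'a)
    \<Rightarrow> ((int \<Rightarrow> (int \<Rightarrow> 'a) \<times> int) \<times> int) monoid" where
  "grpG H a = (grpW H a)\<lparr>carrier := generate (grpW H a) {elt_c H a, elt_s H a}\<rparr>"

definition conjg :: "('b, 'm) monoid_scheme \<Rightarrow> 'b \<Rightarrow> 'b \<Rightarrow> 'b" where
  "conjg G x y = y \<otimes>\<^bsub>G\<^esub> x \<otimes>\<^bsub>G\<^esub> inv\<^bsub>G\<^esub> y"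

definition commg :: "('b, 'm) monoid_scheme \<Rightarrow> 'b \<Rightarrow> 'b \<Rightarrow> 'b" where
  "commg G x y = x \<otimes>\<^bsub>G\<^esub> y \<otimes>\<^bsub>G\<^esub> inv\<^bsub>G\<^esub> x \<otimes>\<^bsub>G\<^esub> inv\<^bsub>G\<^esub> y"

definition phi_gen :: "('a, 'm) monoid_scheme \<Rightarrow> (nat \<Rightarrow> 'a) \<Rightarrow> nat
    \<Rightarrow> (int \<Rightarrow> (int \<Rightarrow> 'a) \<times> int) \<times> int" where
  "phi_gen H a i = commg (grpG H a) (elt_c H a)
      (conjg (grpG H a) (elt_c H a) (elt_s H a [^]\<^bsub>grpG H a\<^esub> ((2::int) ^ i - 1)))"

definition word :: "('b, 'm) monoid_scheme \<Rightarrow> 'b \<Rightarrow> 'b \<Rightarrow> (nat \<Rightarrow> int) \<Rightarrow> (nat \<Rightarrow> int) \<Rightarrow> nat \<Rightarrow> 'b" where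
  "word G s c al be n = s [^]\<^bsub>G\<^esub> al 0 \<otimes>\<^bsub>G\<^esub>
     foldr (\<lambda>j acc. c [^]\<^bsub>G\<^esub> be j \<otimes>\<^bsub>G\<^esub> s [^]\<^bsub>G\<^esub> al j \<otimes>\<^bsub>G\<^esub> acc) [1..<n+1] \<one>\<^bsub>G\<^esub>"

end

theory Submission
  imports Defs "HOL-Algebra.Elementary_Groups"
begin

lemma wr_carrier: "carrier (wr A) = {p. \<forall>x. fst p x \<in> carrier A}" by (simp add: wr_def)
lemma wr_mult: "x \<otimes>\<^bsub>wr A\<^esub> y = ((\<lambda>t. fst x t \<otimes>\<^bsub>A\<^esub> fst y (t + snd x)), snd x + snd y)"
  by (simp add: wr_def)
lemma wr_one: "\<one>\<^bsub>wr A\<^esub> = ((\<lambda>x. \<one>\<^bsub>A\<^esub>), 0)" by (simp add: wr_def)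

lemma wr_group: assumes "group A" shows "group (wr A)"
proof (rule groupI)
  interpret A: group A by fact
  show "x \<otimes>\<^bsub>wr A\<^esub> y \<in> carrier (wr A)" if "x \<in> carrier (wr A)" "y \<in> carrier (wr A)" for x y
    using that by (simp add: wr_carrier wr_mult)
  show "\<one>\<^bsub>wr A\<^esub> \<in> carrier (wr A)" by (simp add: wr_carrier wr_one)
  show "x \<otimes>\<^bsub>wr A\<^esub> y \<otimes>\<^bsub>wr A\<^esub> z = x \<otimes>\<^bsub>wr A\<^esub> (y \<otimes>\<^bsub>wr A\<^esub> z)"
    if "x \<in> carrier (wr A)" "y \<in> carrier (wr A)" "z \<in> carrier (wr A)" for x y z
    using that by (simp add: wr_carrier wr_mult A.m_assoc add.assoc)
  show "\<one>\<^bsub>wr A\<^esub> \<otimes>\<^bsub>wr A\<^esub> x = x" if "x \<in> carrier (wr A)" for x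
    using that by (simp add: wr_carrier wr_mult wr_one)
  show "\<exists>y\<in>carrier (wr A). y \<otimes>\<^bsub>wr A\<^esub> x = \<one>\<^bsub>wr A\<^esub>" if "x \<in> carrier (wr A)" for x
    using that
    by (intro bexI[of _ "(\<lambda>t. inv\<^bsub>A\<^esub> fst x (t - snd x), - snd x)"]) (auto simp: wr_carrier wr_mult wr_one)
qed

lemma wr_inv: assumes "group A" "x \<in> carrier (wr A)"
  shows "inv\<^bsub>wr A\<^esub> x = (\<lambda>t. inv\<^bsub>A\<^esub> fst x (t - snd x), - snd x)"
proof -
  interpret W: group "wr A" using wr_group[OF assms(1)] .
  interpret A: group A by fact
  show ?thesis
    using assms(2) by (intro W.inv_equality) (auto simp: wr_carrier wr_mult wr_one)
qed

lemma wr_hom: assumes "h \<in> hom A B"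
  shows "(\<lambda>p. (h \<circ> fst p, snd p)) \<in> hom (wr A) (wr B)"
  using assms by (auto simp: hom_def wr_carrier wr_mult Pi_def)

abbreviation "TT \<equiv> wr integer_group"

lemma TT_group: "group TT" by (rule wr_group) simp

lemma TT_inv: "inv\<^bsub>TT\<^esub> x = (\<lambda>t. - fst x (t - snd x), - snd x)"
  by (subst wr_inv) (auto simp: wr_carrier)

lemma TT_carrier[simp]: "x \<in> carrier TT" by (simp add: wr_carrier)

lemma TT_s_pow_nat: "((\<lambda>_. 0::int), 1::int) [^]\<^bsub>TT\<^esub> (k::nat) = ((\<lambda>_. 0), int k)"
  by (induction k) (auto simp: wr_mult wr_one)

lemma TT_s_pow: "((\<lambda>_. 0::int), 1::int) [^]\<^bsub>TT\<^esub> (k::int) = ((\<lambda>_. 0), k)"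
  by (simp add: int_pow_def2 TT_s_pow_nat TT_inv)

lemma TT_b_pow_nat: "(g, 0::int) [^]\<^bsub>TT\<^esub> (k::nat) = ((\<lambda>x. int k * g x), 0)"
  by (induction k) (auto simp: wr_mult wr_one algebra_simps)

lemma TT_b_pow: "(g, 0::int) [^]\<^bsub>TT\<^esub> (k::int) = ((\<lambda>x. k * g x), 0)"
  by (simp add: int_pow_def2 TT_b_pow_nat TT_inv)

lemma TT_fold:
  "foldr (\<lambda>j acc. ((\<lambda>x. if x = 1 then 1 else 0), 0) [^]\<^bsub>TT\<^esub> be j \<otimes>\<^bsub>TT\<^esub> ((\<lambda>_. 0::int), 1::int) [^]\<^bsub>TT\<^esub> al j \<otimes>\<^bsub>TT\<^esub> acc) xs \<one>\<^bsub>TT\<^esub>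
   = ((\<lambda>x. \<Sum>p<length xs. be (xs!p) * (if x + (\<Sum>q<p. al (xs!q)) = 1 then 1 else 0)), \<Sum>q<length xs. al (xs!q))"
proof (induction xs)
  case Nil
  then show ?case by (simp add: wr_one)
next
  case (Cons y ys)
  show ?case
    apply (simp only: foldr.simps o_apply Cons.IH)
    apply (simp add: TT_s_pow TT_b_pow wr_mult sum.lessThan_Suc_shift del: sum.lessThan_Suc)
    apply (auto simp: algebra_simps intro!: sum.cong)
    done
qed

lemma fold_hom:
  fixes al be :: "nat \<Rightarrow> int"
  assumes "group_hom G T h" "s \<in> carrier G" "c \<in> carrier G"
  shows "foldr (\<lambda>j acc. c [^]\<^bsub>G\<^esub> be j \<otimes>\<^bsub>G\<^esub> s [^]\<^bsub>G\<^esub> al j \<otimes>\<^bsub>G\<^esub> acc) xs \<one>\<^bsub>G\<^esub> \<in> carrier G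
    \<and> h (foldr (\<lambda>j acc. c [^]\<^bsub>G\<^esub> be j \<otimes>\<^bsub>G\<^esub> s [^]\<^bsub>G\<^esub> al j \<otimes>\<^bsub>G\<^esub> acc) xs \<one>\<^bsub>G\<^esub>)
       = foldr (\<lambda>j acc. h c [^]\<^bsub>T\<^esub> be j \<otimes>\<^bsub>T\<^esub> h s [^]\<^bsub>T\<^esub> al j \<otimes>\<^bsub>T\<^esub> acc) xs \<one>\<^bsub>T\<^esub>"
proof (induction xs)
  case Nil
  interpret group_hom G T h by fact
  show ?case by simp
next
  case (Cons y ys)
  interpret group_hom G T h by fact
  from Cons.IH have i1: "foldr (\<lambda>j acc. c [^]\<^bsub>G\<^esub> be j \<otimes>\<^bsub>G\<^esub> s [^]\<^bsub>G\<^esub> al j \<otimes>\<^bsub>G\<^esub> acc) ys \<one>\<^bsub>G\<^esub> \<in> carrier G"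
    and i2: "h (foldr (\<lambda>j acc. c [^]\<^bsub>G\<^esub> be j \<otimes>\<^bsub>G\<^esub> s [^]\<^bsub>G\<^esub> al j \<otimes>\<^bsub>G\<^esub> acc) ys \<one>\<^bsub>G\<^esub>)
       = foldr (\<lambda>j acc. h c [^]\<^bsub>T\<^esub> be j \<otimes>\<^bsub>T\<^esub> h s [^]\<^bsub>T\<^esub> al j \<otimes>\<^bsub>T\<^esub> acc) ys \<one>\<^bsub>T\<^esub>" by auto
  have p1: "c [^]\<^bsub>G\<^esub> be y \<in> carrier G" "s [^]\<^bsub>G\<^esub> al y \<in> carrier G"
    using assms(2,3) by (auto intro: G.int_pow_closed)
  show ?case using i1 i2 p1 by (simp add: hom_int_pow hom_mult assms(2,3))
qed

lemma word_hom:
  fixes al be :: "nat \<Rightarrow> int"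
  assumes "group_hom G T h" "s \<in> carrier G" "c \<in> carrier G"
  shows "h (word G s c al be n) = word T (h s) (h c) al be n"
proof -
  interpret group_hom G T h by fact
  show ?thesis using fold_hom[OF assms, of be al "[1..<n+1]"] assms(2,3)
    by (simp add: word_def hom_int_pow)
qed

lemma K_group: assumes "group H" "a ` {1..} \<subseteq> carrier H" shows "group (grpK H a)"
proof -
  interpret W: group "wr H" using wr_group[OF assms(1)] .
  interpret H: group H by fact
  have "insert (wr_z H) {wr_b H a i | i. i \<ge> 1} \<subseteq> carrier (wr H)"
    using assms(2) by (auto simp: wr_carrier wr_z_def wr_b_def)
  then have "subgroup (generate (wr H) (insert (wr_z H) {wr_b H a i | i. i \<ge> 1})) (wr H)"
    by (rule W.generate_is_subgroup)
  then show ?thesis unfolding grpK_def by (rule subgroup.subgroup_is_group) (rule W.is_group)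
qed

lemma snd_hom: "snd \<in> hom (grpK H a) integer_group"
  by (auto simp: hom_def grpK_def wr_mult)

definition psi :: "(int \<Rightarrow> (int \<Rightarrow> 'a) \<times> int) \<times> int \<Rightarrow> (int \<Rightarrow> int) \<times> int" where
  "psi = (\<lambda>p. (snd \<circ> fst p, snd p))"

lemma psi_hom_W: "psi \<in> hom (grpW H a) TT"
  unfolding psi_def grpW_def by (rule wr_hom[OF snd_hom])

lemma c_in: "elt_c H a \<in> carrier (grpW H a)"
proof -
  have "cfun H a x \<in> carrier (grpK H a)" for x
  proof -
    have "wr_b H a i \<in> generate (wr H) (insert (wr_z H) {wr_b H a i | i. i \<ge> 1})" if "i > 0" for i
      by (rule generate.incl) (use that in auto)
    then show ?thesis unfolding cfun_def grpK_def
      by (auto intro: generate.incl generate.one)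
  qed
  then show ?thesis by (simp add: elt_c_def grpW_def wr_carrier)
qed

lemma s_in: "elt_s H a \<in> carrier (grpW H a)"
  unfolding elt_s_def grpW_def wr_carrier grpK_def
  by (auto intro: generate.one)

lemma G_group: assumes "group H" "a ` {1..} \<subseteq> carrier H" shows "group (grpG H a)"
  and "carrier (grpG H a) \<subseteq> carrier (grpW H a)"
  and "elt_c H a \<in> carrier (grpG H a)" "elt_s H a \<in> carrier (grpG H a)"
proof -
  interpret W: group "grpW H a" unfolding grpW_def using wr_group[OF K_group[OF assms]] .
  have "subgroup (generate (grpW H a) {elt_c H a, elt_s H a}) (grpW H a)"
    using c_in s_in by (intro W.generate_is_subgroup) auto
  then show "group (grpG H a)" "carrier (grpG H a) \<subseteq> carrier (grpW H a)"
    unfolding grpG_def by (auto intro: subgroup.subgroup_is_group W.is_group dest: subgroup.subset)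
  show "elt_c H a \<in> carrier (grpG H a)" "elt_s H a \<in> carrier (grpG H a)"
    unfolding grpG_def by (auto intro: generate.incl)
qed

lemma psi_hom_G: assumes "group H" "a ` {1..} \<subseteq> carrier H" shows "group_hom (grpG H a) TT psi"
proof -
  have "psi \<in> hom (grpG H a) TT"
    using psi_hom_W[of H a] G_group(2)[OF assms] unfolding hom_def grpG_def
    by (auto simp: Pi_def)
  then show ?thesis using G_group(1)[OF assms] TT_group
    by (simp add: group_hom_def group_hom_axioms_def)
qed

lemma psi_c: "psi (elt_c H a) = ((\<lambda>x. if x = 1 then 1 else 0), 0)"
  by (auto simp: psi_def elt_c_def cfun_def wr_z_def wr_b_def grpK_def wr_def)

lemma psi_s: "psi (elt_s H a) = ((\<lambda>_. 0), 1)"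
  by (auto simp: psi_def elt_s_def grpK_def wr_def)

lemma psi_phi_gen: assumes "group H" "a ` {1..} \<subseteq> carrier H"
  shows "psi (phi_gen H a i) = \<one>\<^bsub>TT\<^esub>"
proof -
  interpret h: group_hom "grpG H a" TT psi using psi_hom_G[OF assms] .
  note cs = G_group(3,4)[OF assms]
  let ?G = "grpG H a" and ?c = "elt_c H a" and ?s = "elt_s H a"
  let ?p = "?s [^]\<^bsub>?G\<^esub> ((2::int) ^ i - 1)"
  have p: "?p \<in> carrier ?G" using cs by simp
  have y: "conjg ?G ?c ?p \<in> carrier ?G" using cs p by (simp add: conjg_def)
  have "psi (conjg ?G ?c ?p) = psi ?p \<otimes>\<^bsub>TT\<^esub> psi ?c \<otimes>\<^bsub>TT\<^esub> inv\<^bsub>TT\<^esub> psi ?p"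
    using cs p by (simp add: conjg_def)
  also have "psi ?p = ((\<lambda>_. 0), 2 ^ i - 1)"
    using cs by (simp add: h.hom_int_pow psi_s TT_s_pow)
  finally have py: "psi (conjg ?G ?c ?p) = ((\<lambda>x. if x + (2 ^ i - 1) = 1 then 1 else 0), 0)"
    by (simp add: psi_c wr_mult TT_inv)
  have "psi (phi_gen H a i) = psi ?c \<otimes>\<^bsub>TT\<^esub> psi (conjg ?G ?c ?p) \<otimes>\<^bsub>TT\<^esub> inv\<^bsub>TT\<^esub> psi ?c
      \<otimes>\<^bsub>TT\<^esub> inv\<^bsub>TT\<^esub> psi (conjg ?G ?c ?p)"
    using cs y unfolding phi_gen_def commg_def by simp
  also have "\<dots> = \<one>\<^bsub>TT\<^esub>"
    unfolding py psi_c by (simp add: wr_mult TT_inv wr_one)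
  finally show ?thesis .
qed

theorem lemma5:
  fixes H :: "('a, 'm) monoid_scheme" and a :: "nat \<Rightarrow> 'a"
    and \<phi> :: "'a \<Rightarrow> (int \<Rightarrow> (int \<Rightarrow> 'a) \<times> int) \<times> int"
    and n :: nat and \<alpha> \<beta> :: "nat \<Rightarrow> int"
  assumes "group H"
    and "a ` {1..} \<subseteq> carrier H"
    and "generate H (a ` {1..}) = carrier H"
    and "\<phi> \<in> hom H (grpG H a)"
    and "\<forall>i\<ge>1. \<phi> (a i) = phi_gen H a i"
    and "n \<ge> 1"
    and "\<forall>i\<in>{1..<n}. \<alpha> i \<noteq> 0"
    and "\<forall>j\<in>{1..n}. \<beta> j \<noteq> 0"
    and "word (grpG H a) (elt_s H a) (elt_c H a) \<alpha> \<beta> n \<in> \<phi> ` carrier H"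
  shows "\<forall>i\<in>{1..n}.
           (\<Sum>j\<in>{j\<in>{1..n}. (\<Sum>k<j. \<alpha> k) = (\<Sum>k<i. \<alpha> k)}. \<beta> j) = 0"
proof -
  interpret h: group_hom "grpG H a" TT psi using psi_hom_G[OF assms(1,2)] .
  interpret f: group_hom H "grpG H a" \<phi>
    using assms(1,4) G_group(1)[OF assms(1,2)] by (simp add: group_hom_def group_hom_axioms_def)
  note cs = G_group(3,4)[OF assms(1,2)]
  have key: "psi (\<phi> x) = \<one>\<^bsub>TT\<^esub>" if "x \<in> generate H (a ` {1..})" for x
    using that
  proof (induction rule: generate.induct)
    case one
    then show ?case by simp
  next
    case (incl h)
    then obtain i where "i \<ge> 1" "h = a i" by auto
    then show ?case using assms(5) psi_phi_gen[OF assms(1,2)] by simp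
  next
    case (inv h)
    then obtain i where i: "i \<ge> 1" "h = a i" by auto
    then have "h \<in> carrier H" using assms(2) by auto
    then have "\<phi> h \<in> carrier (grpG H a)" by simp
    moreover have "psi (\<phi> h) = \<one>\<^bsub>TT\<^esub>" using i assms(5) psi_phi_gen[OF assms(1,2)] by simp
    ultimately show ?case using \<open>h \<in> carrier H\<close> by (simp del: f.hom_closed)
  next
    case (eng h1 h2)
    then have "h1 \<in> carrier H" "h2 \<in> carrier H" using assms(3) by auto
    then show ?case using eng by simp
  qed
  from assms(9) obtain x where x: "x \<in> carrier H"
    and w: "word (grpG H a) (elt_s H a) (elt_c H a) \<alpha> \<beta> n = \<phi> x" by auto
  have "psi (word (grpG H a) (elt_s H a) (elt_c H a) \<alpha> \<beta> n) = \<one>\<^bsub>TT\<^esub>"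
    using w key x assms(3) by simp
  then have "word TT (psi (elt_s H a)) (psi (elt_c H a)) \<alpha> \<beta> n = \<one>\<^bsub>TT\<^esub>"
    using word_hom[OF h.group_hom_axioms cs(2,1)] by simp
  then have E0: "\<And>t. (\<Sum>p<length [1..<n+1]. \<beta> ([1..<n+1]!p) * (if t + \<alpha> 0 + (\<Sum>q<p. \<alpha> ([1..<n+1]!q)) = 1 then 1 else 0)) = 0"
    unfolding word_def psi_s psi_c TT_fold
    by (simp add: TT_s_pow wr_mult wr_one fun_eq_iff add.assoc del: upt_Suc)
  have E: "(\<Sum>p<n. \<beta> (p+1) * (if t + \<alpha> 0 + (\<Sum>q<p. \<alpha> (q+1)) = 1 then 1 else 0)) = 0" for t
  proof -
    have "(\<Sum>p<n. \<beta> (p+1) * (if t + \<alpha> 0 + (\<Sum>q<p. \<alpha> (q+1)) = 1 then 1 else 0))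
      = (\<Sum>p<length [1..<n+1]. \<beta> ([1..<n+1]!p) * (if t + \<alpha> 0 + (\<Sum>q<p. \<alpha> ([1..<n+1]!q)) = 1 then 1 else 0))"
    proof (rule sum.cong)
      fix p assume p: "p \<in> {..<length [1..<n+1]}"
      have "(\<Sum>q<p. \<alpha> ([1..<n+1]!q)) = (\<Sum>q<p. \<alpha> (q+1))"
        by (rule sum.cong) (use p in \<open>auto simp del: upt_Suc\<close>)
      then show "\<beta> (p+1) * (if t + \<alpha> 0 + (\<Sum>q<p. \<alpha> (q+1)) = 1 then 1 else 0)
         = \<beta> ([1..<n+1]!p) * (if t + \<alpha> 0 + (\<Sum>q<p. \<alpha> ([1..<n+1]!q)) = 1 then 1 else 0)"
        using p by (simp del: upt_Suc)
    qed (simp del: upt_Suc)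
    then show ?thesis using E0[of t] by simp
  qed
  show ?thesis
  proof
    fix i assume i: "i \<in> {1..n}"
    have gam: "\<alpha> 0 + (\<Sum>q<p. \<alpha> (q+1)) = (\<Sum>k<p+1. \<alpha> k)" for p
      by (simp add: sum.lessThan_Suc_shift del: sum.lessThan_Suc)
    have "0 = (\<Sum>p<n. \<beta> (p+1) * (if (1 - (\<Sum>k<i. \<alpha> k)) + \<alpha> 0 + (\<Sum>q<p. \<alpha> (q+1)) = 1 then 1 else 0))"
      using E[of "1 - (\<Sum>k<i. \<alpha> k)"] by (simp add: algebra_simps)
    also have "\<dots> = (\<Sum>p<n. (\<lambda>j. if (\<Sum>k<j. \<alpha> k) = (\<Sum>k<i. \<alpha> k) then \<beta> j else 0) (Suc p))"
    proof (rule sum.cong)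
      fix p
      have "((1 - (\<Sum>k<i. \<alpha> k)) + \<alpha> 0 + (\<Sum>q<p. \<alpha> (q+1)) = 1) = ((\<Sum>k<p+1. \<alpha> k) = (\<Sum>k<i. \<alpha> k))"
      proof -
        have e1: "((1 - u) + v + w = 1) = (v + w = u)" for u v w :: int by arith
        show ?thesis unfolding e1 gam[of p] ..
      qed
      then show "\<beta> (p+1) * (if (1 - (\<Sum>k<i. \<alpha> k)) + \<alpha> 0 + (\<Sum>q<p. \<alpha> (q+1)) = 1 then 1 else 0)
        = (\<lambda>j. if (\<Sum>k<j. \<alpha> k) = (\<Sum>k<i. \<alpha> k) then \<beta> j else 0) (Suc p)"
        by (simp only: Suc_eq_plus1) simp
    qed simp
    also have "\<dots> = (\<Sum>j\<in>Suc ` {..<n}. (if (\<Sum>k<j. \<alpha> k) = (\<Sum>k<i. \<alpha> k) then \<beta> j else 0))"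
      by (simp add: sum.reindex)
    also have "Suc ` {..<n} = {1..n}" by (simp add: image_Suc_lessThan)
    finally have Z: "0 = (\<Sum>j\<in>{1..n}. (if (\<Sum>k<j. \<alpha> k) = (\<Sum>k<i. \<alpha> k) then \<beta> j else 0))" .
    show "(\<Sum>j\<in>{j\<in>{1..n}. (\<Sum>k<j. \<alpha> k) = (\<Sum>k<i. \<alpha> k)}. \<beta> j) = 0"
      unfolding sum.inter_filter[OF finite_atLeastAtMost] using Z by simp
  qed
qed

end
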